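(* There exists an absolute constant $c>0$ such that the following holds. Let $(\mathsf{CAL}_T)_{T\ge1}$ be calibration measures and $\varepsilon:\mathbb Z_{>0}\to[0,\infty)$ a function such that for every positive integer $T$: (1) (Actionability) for every decision task $Z=(A,U)$ with $U:A\times\{0,1\}\to[0,1]$ and every $\alpha\ge0$ there exists a randomized response function $r_{Z,\alpha}:[0,1]\to\Delta(A)$ (not depending on the distribution) such that every distribution $\mathcal D$ on $[0,1]\times\{0,1\}$ with $\mathsf{CAL}_T(\mathcal D)\le\alpha$ satisfies $\mathsf{SR}_Z(r_{Z,\alpha},\mathcal D)\le\alpha$; and (2) (Testability) for every calibrated distribution $\mathcal D$ on $[0,1]\times\{0,1\}$, if $S_T$ is the uniform distribution over $T$ i.i.d. samples from $\mathcal D$, then $\mathbb E[\mathsf{CAL}_T(S_T)]\le\varepsilon(T)$. Then $\varepsilon(T)\ge c\,T^{-1/2}$ for every positive integer $T$.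
   Context: A calibration measure $\mathsf{CAL}_T$ assigns a nonnegative real number to each distribution of pairs $(p,y)\in[0,1]\times\{0,1\}$ (in particular to uniform distributions over finite samples). A distribution of $(p,y)$ is calibrated if $\mathbb E[y\mid p]=p$. A decision task $Z=(A,U)$ consists of an action set $A$ and a utility function $U:A\times\{0,1\}\to[0,1]$. For a randomized response function $r:[0,1]\to\Delta(A)$ and a distribution $\mathcal D$ on $[0,1]\times\{0,1\}$, the swap regret is $\mathsf{SR}_Z(r,\mathcal D)=\sup_{\sigma:A\to A}\mathbb E_{(p,y)\sim\mathcal D,\,a\sim r(p)}[U(\sigma(a),y)-U(a,y)]$. *)

theory Defs
  imports "HOL-Probability.Probability"
begin

text \<open>Distributions of pairs (p,y) in [0,1] x {0,1}; the label y is encoded as a bool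
  (True = 1). Distributions are represented as (discrete) pmfs.\<close>

definition valid_dist :: "(real \<times> bool) pmf \<Rightarrow> bool" where
  "valid_dist D \<longleftrightarrow> (\<forall>x\<in>set_pmf D. fst x \<in> {0..1})"

text \<open>Calibration: E[y | p] = p, i.e. P(p, y=1) = p * P(p) for every value p.\<close>
definition calibrated :: "(real \<times> bool) pmf \<Rightarrow> bool" where
  "calibrated D \<longleftrightarrow>
     (\<forall>p. measure_pmf.prob D {(p, True)} = p * measure_pmf.prob D ({p} \<times> UNIV))"

definition decision_task :: "nat set \<Rightarrow> (nat \<Rightarrow> bool \<Rightarrow> real) \<Rightarrow> bool" where
  "decision_task A U \<longleftrightarrow> finite A \<and> A \<noteq> {} \<and> (\<forall>a\<in>A. \<forall>y. U a y \<in> {0..1})"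

definition response_fun :: "nat set \<Rightarrow> (real \<Rightarrow> nat pmf) \<Rightarrow> bool" where
  "response_fun A r \<longleftrightarrow> (\<forall>p\<in>{0..1}. set_pmf (r p) \<subseteq> A)"

definition swap_regret ::
  "nat set \<Rightarrow> (nat \<Rightarrow> bool \<Rightarrow> real) \<Rightarrow> (real \<Rightarrow> nat pmf) \<Rightarrow> (real \<times> bool) pmf \<Rightarrow> real" where
  "swap_regret A U r D =
     (SUP \<sigma>\<in>{\<sigma>. \<forall>a\<in>A. \<sigma> a \<in> A}.
        measure_pmf.expectation D
          (\<lambda>(p, y). measure_pmf.expectation (r p) (\<lambda>a. U (\<sigma> a) y - U a y)))"

definition empirical :: "(real \<times> bool) list \<Rightarrow> (real \<times> bool) pmf" where
  "empirical xs = pmf_of_multiset (mset xs)"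

end

theory Submission imports Defs begin
definition D0 :: "(real \<times> bool) pmf" where "D0 = map_pmf (\<lambda>b. (1/2::real, b)) (bernoulli_pmf (1/2))"
definition sg :: "bool \<Rightarrow> real" where "sg b = (if b then 1 else -1)"
definition ssum :: "(real \<times> bool) list \<Rightarrow> real" where "ssum xs = sum_list (map (\<lambda>x. sg (snd x)) xs)"

lemma set_D0: "set_pmf D0 = {(1/2, True), (1/2, False)}"
  by (auto simp: D0_def set_pmf_bernoulli)

lemma finite_rep: "finite (set_pmf (replicate_pmf n D0))"
proof -
  have "set_pmf (replicate_pmf n D0) = {xs \<in> lists (set_pmf D0). length xs = n}"
    by (rule set_replicate_pmf)
  moreover have "finite {xs. set xs \<subseteq> set_pmf D0 \<and> length xs = n}"
    by (rule finite_lists_length_eq) (simp add: set_D0)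
  ultimately show ?thesis by (simp add: lists_eq_set)
qed

lemma rep_step:
  fixes f :: "(real \<times> bool) list \<Rightarrow> real"
  shows "measure_pmf.expectation (replicate_pmf (Suc n) D0) f =
    (measure_pmf.expectation (replicate_pmf n D0) (\<lambda>xs. f ((1/2,True)#xs)) +
     measure_pmf.expectation (replicate_pmf n D0) (\<lambda>xs. f ((1/2,False)#xs))) / 2"
proof -
  have e: "replicate_pmf (Suc n) D0 = bernoulli_pmf (1/2) \<bind> (\<lambda>b. map_pmf (\<lambda>xs. (1/2, b) # xs) (replicate_pmf n D0))"
    by (simp add: D0_def map_pmf_def bind_assoc_pmf bind_return_pmf)
  show ?thesis
    unfolding e
    by (subst pmf_expectation_bind[where A=UNIV]) (auto simp: finite_rep UNIV_bool)
qed

lemma intg[simp]: "integrable (measure_pmf (replicate_pmf n D0)) (f :: (real \<times> bool) list \<Rightarrow> real)"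
  by (rule integrable_measure_pmf_finite[OF finite_rep])

lemma ssum_Cons[simp]: "ssum ((p,b)#xs) = sg b + ssum xs"
  by (simp add: ssum_def)

lemma E_add: fixes f g :: "(real \<times> bool) list \<Rightarrow> real" shows "measure_pmf.expectation (replicate_pmf n D0) f + measure_pmf.expectation (replicate_pmf n D0) g
   = measure_pmf.expectation (replicate_pmf n D0) (\<lambda>x. f x + g x)"
  by (rule Bochner_Integration.integral_add[symmetric]) (rule intg)+

lemma E_lin: fixes f g :: "(real \<times> bool) list \<Rightarrow> real" shows "measure_pmf.expectation (replicate_pmf n D0) (\<lambda>x. a * f x + b)
   = a * measure_pmf.expectation (replicate_pmf n D0) f + b"
  by (simp add: Bochner_Integration.integral_add[OF intg intg])

lemma E_lin2: fixes f g :: "(real \<times> bool) list \<Rightarrow> real" shows "measure_pmf.expectation (replicate_pmf n D0) (\<lambda>x. a * f x + b * g x + c)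
   = a * measure_pmf.expectation (replicate_pmf n D0) f + b * measure_pmf.expectation (replicate_pmf n D0) g + c"
  by (simp add: Bochner_Integration.integral_add[OF intg intg])

lemma mom2: "measure_pmf.expectation (replicate_pmf n D0) (\<lambda>xs. ssum xs ^ 2) = real n"
proof (induction n)
  case 0 then show ?case by (simp add: ssum_def)
next
  case (Suc n)
  have "measure_pmf.expectation (replicate_pmf (Suc n) D0) (\<lambda>xs. ssum xs ^ 2)
    = measure_pmf.expectation (replicate_pmf n D0) (\<lambda>xs. 2 * ssum xs ^ 2 + 2) / 2"
    unfolding rep_step E_add
    by (intro arg_cong[where f="\<lambda>x. x / 2"] Bochner_Integration.integral_cong)
       (simp_all add: sg_def power2_eq_square algebra_simps)
  also have "\<dots> = real (Suc n)" unfolding E_lin by (simp add: Suc)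
  finally show ?case .
qed

lemma mom4: "measure_pmf.expectation (replicate_pmf n D0) (\<lambda>xs. ssum xs ^ 4) = 3 * real n ^ 2 - 2 * real n"
proof (induction n)
  case 0 then show ?case by (simp add: ssum_def)
next
  case (Suc n)
  have "measure_pmf.expectation (replicate_pmf (Suc n) D0) (\<lambda>xs. ssum xs ^ 4)
    = measure_pmf.expectation (replicate_pmf n D0) (\<lambda>xs. 2 * ssum xs ^ 4 + 12 * ssum xs ^ 2 + 2) / 2"
    unfolding rep_step E_add
    by (intro arg_cong[where f="\<lambda>x. x / 2"] Bochner_Integration.integral_cong)
       (simp_all add: sg_def power2_eq_square power4_eq_xxxx algebra_simps)
  also have "\<dots> = 3 * real (Suc n) ^ 2 - 2 * real (Suc n)" unfolding E_lin2
    by (simp add: Suc mom2[unfolded power2_eq_square] power2_eq_square algebra_simps)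
  finally show ?case .
qed

lemma abs_exp_le1:
  fixes M :: "'a pmf" and f :: "'a \<Rightarrow> real"
  assumes "\<And>x. \<bar>f x\<bar> \<le> 1"
  shows "\<bar>measure_pmf.expectation M f\<bar> \<le> 1"
proof -
  have i: "integrable (measure_pmf M) f"
    by (rule measure_pmf.integrable_const_bound[where B=1]) (use assms in auto)
  have "measure_pmf.expectation M f \<le> 1"
    by (rule measure_pmf.integral_le_const[OF i]) (use assms abs_le_D1 in auto)
  moreover have "-1 \<le> measure_pmf.expectation M f"
    by (rule measure_pmf.integral_ge_const[OF i]) (use assms in \<open>auto simp: abs_le_iff\<close>)
  ultimately show ?thesis by simp
qed

lemma sum_list_count_real:
  fixes h :: "'a \<Rightarrow> real"
  assumes "finite X" "set xs \<subseteq> X"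
  shows "sum_list (map h xs) = (\<Sum>a\<in>X. real (count_list xs a) * h a)"
  using assms(2)
proof (induction xs)
  case Nil then show ?case by simp
next
  case (Cons x xs)
  have "(\<Sum>a\<in>X. real (count_list (x#xs) a) * h a) = (\<Sum>a\<in>X. (if x = a then h a else 0) + real (count_list xs a) * h a)"
    by (rule sum.cong) (auto simp: algebra_simps)
  also have "\<dots> = h x + (\<Sum>a\<in>X. real (count_list xs a) * h a)"
    using Cons.prems assms(1) by (simp add: sum.distrib)
  finally show ?case using Cons by simp
qed

lemma emp_exp:
  fixes h :: "real \<times> bool \<Rightarrow> real"
  assumes "xs \<noteq> []"
  shows "measure_pmf.expectation (empirical xs) h = sum_list (map h xs) / length xs"
proof -
  have ne: "mset xs \<noteq> {#}" using assms by simp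
  have "measure_pmf.expectation (empirical xs) h = (\<Sum>a\<in>set xs. h a * pmf (empirical xs) a)"
    unfolding empirical_def by (rule integral_measure_pmf_real) (use ne in auto)
  also have "\<dots> = (\<Sum>a\<in>set xs. count_list xs a * h a) / length xs"
    unfolding empirical_def using ne
    by (simp add: sum_divide_distrib count_mset mult.commute)
  also have "\<dots> = sum_list (map h xs) / length xs"
    by (simp add: sum_list_count_real[of "set xs"])
  finally show ?thesis .
qed

definition UU :: "nat \<Rightarrow> bool \<Rightarrow> real" where "UU a y = (if (a = 1) = y then 1 else 0)"

lemma task: "decision_task {0,1} UU"
  by (auto simp: decision_task_def UU_def)

lemma UU_sg: "UU c y - UU a y = sg y * (UU c True - UU a True)"
  by (auto simp: UU_def sg_def)

lemma regret_const:
  assumes "xs \<noteq> []" "\<forall>x\<in>set xs. fst x = 1/2"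
  shows "measure_pmf.expectation (empirical xs)
          (\<lambda>(p, y). measure_pmf.expectation (r p) (\<lambda>a. UU ((\<lambda>_. c) a) y - UU a y))
       = (UU c True - measure_pmf.expectation (r (1/2)) (\<lambda>a. UU a True)) * ssum xs / length xs"
proof -
  have ia: "integrable (measure_pmf M) (\<lambda>a. UU a True)" for M :: "nat pmf"
    by (rule measure_pmf.integrable_const_bound[where B=1]) (auto simp: UU_def)
  have inner: "measure_pmf.expectation (r p) (\<lambda>a. UU c y - UU a y)
      = sg y * (UU c True - measure_pmf.expectation (r p) (\<lambda>a. UU a True))" for p y
  proof -
    have e1: "measure_pmf.expectation (r p) (\<lambda>a. UU c y - UU a y)
        = measure_pmf.expectation (r p) (\<lambda>a. sg y * (UU c True - UU a True))"
      by (rule Bochner_Integration.integral_cong[OF refl]) (rule UU_sg)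
    have e2: "measure_pmf.expectation (r p) (\<lambda>a. sg y * (UU c True - UU a True)) = sg y * measure_pmf.expectation (r p) (\<lambda>a. UU c True - UU a True)"
      by (rule integral_mult_right_zero)
    have e3: "measure_pmf.expectation (r p) (\<lambda>a. UU c True - UU a True)
        = measure_pmf.expectation (r p) (\<lambda>a. UU c True) - measure_pmf.expectation (r p) (\<lambda>a. UU a True)"
      by (rule Bochner_Integration.integral_diff[OF _ ia]) simp
    have e4: "measure_pmf.expectation (r p) (\<lambda>a. UU c True) = UU c True"
      by simp
    show ?thesis unfolding e1 e2 e3 e4 ..
  qed
  have "sum_list (map (\<lambda>(p, y). measure_pmf.expectation (r p) (\<lambda>a. UU c y - UU a y)) xs)
      = sum_list (map (\<lambda>x. (UU c True - measure_pmf.expectation (r (1/2)) (\<lambda>a. UU a True)) * sg (snd x)) xs)"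
  proof (rule arg_cong[where f=sum_list], rule map_cong[OF refl])
    fix x assume "x \<in> set xs"
    then have "fst x = 1/2" using assms(2) by blast
    then show "(case x of (p, y) \<Rightarrow> measure_pmf.expectation (r p) (\<lambda>a. UU c y - UU a y)) =
      (UU c True - measure_pmf.expectation (r (1/2)) (\<lambda>a. UU a True)) * sg (snd x)"
      by (cases x) (simp only: inner prod.case fst_conv snd_conv mult.commute)
  qed
  also have "\<dots> = (UU c True - measure_pmf.expectation (r (1/2)) (\<lambda>a. UU a True)) * ssum xs"
    by (simp add: ssum_def sum_list_const_mult)
  finally show ?thesis using assms(1) by (simp add: emp_exp)
qed

lemma sr_ge:
  assumes "swap_regret {0,1} UU r (empirical xs) \<le> \<alpha>" "xs \<noteq> []" "\<forall>x\<in>set xs. fst x = 1/2" "c \<in> {0,1}"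
  shows "(UU c True - measure_pmf.expectation (r (1/2)) (\<lambda>a. UU a True)) * ssum xs / length xs \<le> \<alpha>"
proof -
  let ?g = "\<lambda>\<sigma>. measure_pmf.expectation (empirical xs)
          (\<lambda>(p, y). measure_pmf.expectation (r p) (\<lambda>a. UU (\<sigma> a) y - UU a y))"
  have b: "?g \<sigma> \<le> 1" for \<sigma>
  proof -
    have "\<bar>?g \<sigma>\<bar> \<le> 1"
    proof (rule abs_exp_le1)
      fix x :: "real \<times> bool"
      show "\<bar>(case x of (p, y) \<Rightarrow> measure_pmf.expectation (r p) (\<lambda>a. UU (\<sigma> a) y - UU a y))\<bar> \<le> 1"
        by (cases x) (simp, rule abs_exp_le1, simp add: UU_def)
    qed
    then show ?thesis by simp
  qed
  have "?g (\<lambda>_. c) \<le> (SUP \<sigma>\<in>{\<sigma>. \<forall>a\<in>{0,1}. \<sigma> a \<in> {0,1}}. ?g \<sigma>)"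
  proof (rule cSUP_upper)
    show "(\<lambda>_. c) \<in> {\<sigma>. \<forall>a\<in>{0,1}. \<sigma> a \<in> {0,1}}" using assms(4) by simp
    show "bdd_above (?g ` {\<sigma>. \<forall>a\<in>{0,1}. \<sigma> a \<in> {0,1}})"
      by (rule bdd_aboveI2[where M=1]) (rule b)
  qed
  also have "\<dots> \<le> \<alpha>" using assms(1) unfolding swap_regret_def .
  finally show ?thesis using regret_const[OF assms(2,3), of r c] by simp
qed

lemma valid_D0: "valid_dist D0"
  by (auto simp: valid_dist_def set_D0)

lemma calib_D0: "calibrated D0"
  unfolding calibrated_def
proof
  fix p :: real
  show "measure_pmf.prob D0 {(p, True)} = p * measure_pmf.prob D0 ({p} \<times> UNIV)"
  proof (cases "p = 1/2")
    case True
    have a: "(\<lambda>b. (1/2::real, b)) -` {(1/2, True)} = {True}" by auto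
    have b: "(\<lambda>b. (1/2::real, b)) -` ({1/2} \<times> UNIV) = UNIV" by auto
    have "measure_pmf.prob D0 {(1/2, True)} = measure_pmf.prob (bernoulli_pmf (1/2)) {True}"
      "measure_pmf.prob D0 ({1/2} \<times> UNIV) = 1"
      unfolding D0_def measure_map_pmf a b by simp_all
    then show ?thesis unfolding True by (simp add: measure_pmf_single)
  next
    case False
    have "(\<lambda>b. (1/2::real, b)) -` {(p, True)} = {}" using False by auto
    moreover have "(\<lambda>b. (1/2::real, b)) -` ({p} \<times> UNIV) = {}" using False by auto
    ultimately show ?thesis unfolding D0_def measure_map_pmf by (metis measure_empty mult_zero_right)
  qed
qed

lemma rep_map: "replicate_pmf n (map_pmf f p) = map_pmf (map f) (replicate_pmf n p)"
  by (induction n) (simp_all add: map_pmf_def bind_assoc_pmf bind_return_pmf)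

definition flip :: "real \<times> bool \<Rightarrow> real \<times> bool" where "flip x = (fst x, \<not> snd x)"

lemma bern_not: "map_pmf Not (bernoulli_pmf (1/2)) = bernoulli_pmf (1/2)"
proof (rule pmf_eqI)
  fix b
  have "pmf (map_pmf Not (bernoulli_pmf (1/2))) (\<not> (\<not> b)) = pmf (bernoulli_pmf (1/2)) (\<not> b)"
    by (rule pmf_map_inj') (simp add: inj_def)
  then show "pmf (map_pmf Not (bernoulli_pmf (1/2))) b = pmf (bernoulli_pmf (1/2)) b" by simp
qed

lemma flip_D0: "map_pmf flip D0 = D0"
proof -
  have "map_pmf flip D0 = map_pmf (\<lambda>b. (1/2::real, b)) (map_pmf Not (bernoulli_pmf (1/2)))"
    by (simp add: D0_def map_pmf_comp flip_def)
  then show ?thesis by (simp add: bern_not D0_def)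
qed

lemma rep_flip: "map_pmf (map flip) (replicate_pmf n D0) = replicate_pmf n D0"
  by (metis rep_map flip_D0)

lemma supp_rep: "xs \<in> set_pmf (replicate_pmf n D0) \<Longrightarrow> length xs = n \<and> (\<forall>x\<in>set xs. fst x = 1/2)"
  by (auto simp: set_replicate_pmf set_D0)

lemma ssum_flip: "ssum (map flip xs) = - ssum xs"
  by (induction xs) (auto simp: ssum_def flip_def sg_def)

lemma valid_emp: "xs \<noteq> [] \<Longrightarrow> \<forall>x\<in>set xs. fst x = 1/2 \<Longrightarrow> valid_dist (empirical xs)"
  by (auto simp: valid_dist_def empirical_def)

lemma abs_poly: fixes x t :: real assumes "t > 0"
  shows "3 / (2*t) * x^2 - x^4 / (2 * t^3) \<le> \<bar>x\<bar>"
proof -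
  let ?u = "\<bar>x\<bar>"
  have "0 \<le> ?u * (?u - t)^2 * (?u + 2*t)" using assms by simp
  also have "?u * (?u - t)^2 * (?u + 2*t) = 2*t^3*?u - 3*t^2*x^2 + x^4"
    by (simp add: power2_eq_square power4_eq_xxxx algebra_simps power3_eq_cube abs_mult_self_eq flip: abs_mult)
  finally have "3*t^2*x^2 - x^4 \<le> 2*t^3*?u" by simp
  then show ?thesis using assms by (simp add: field_simps power3_eq_cube power2_eq_square)
qed

lemma abs_moment:
  assumes "n \<ge> 1"
  shows "3 / (16 * sqrt (2 * real n)) \<le> measure_pmf.expectation (replicate_pmf n D0) (\<lambda>xs. \<bar>ssum xs\<bar>) / (4 * real n)"
proof -
  define t where "t = sqrt (2 * real n)"
  have t0: "t > 0" using assms by (simp add: t_def)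
  have t2: "t^2 = 2 * real n" by (simp add: t_def)
  have t3: "t^3 = 2 * real n * t" by (metis power3_eq_cube power2_eq_square t2)
  let ?E = "measure_pmf.expectation (replicate_pmf n D0)"
  have "?E (\<lambda>xs. 3 / (2*t) * ssum xs ^ 2 - ssum xs ^ 4 / (2 * t^3)) \<le> ?E (\<lambda>xs. \<bar>ssum xs\<bar>)"
    by (rule integral_mono) (use abs_poly[OF t0] in simp_all)
  moreover have "?E (\<lambda>xs. 3 / (2*t) * ssum xs ^ 2 - ssum xs ^ 4 / (2 * t^3))
      = 3 / (2*t) * real n - (3 * real n ^ 2 - 2 * real n) / (2 * t^3)"
    by (simp add: Bochner_Integration.integral_diff[OF intg intg] mom2 mom4)
  moreover have "3 / (2*t) * real n - (3 * real n ^ 2 - 2 * real n) / (2 * t^3) \<ge> 3 * real n / (4 * t)"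
  proof -
    have "(3 * real n ^ 2 - 2 * real n) / (2 * t^3) \<le> 3 * real n ^ 2 / (2 * t^3)"
      using t0 by (intro divide_right_mono) auto
    also have "\<dots> = 3 * real n / (4 * t)" unfolding t3 using assms t0
      by (simp add: field_simps power2_eq_square)
    finally show ?thesis using t0 by (simp add: field_simps)
  qed
  ultimately have "3 * real n / (4 * t) \<le> ?E (\<lambda>xs. \<bar>ssum xs\<bar>)" by linarith
  then have "3 * real n / (4 * t) / (4 * real n) \<le> ?E (\<lambda>xs. \<bar>ssum xs\<bar>) / (4 * real n)"
    using assms by (intro divide_right_mono) auto
  moreover have "3 * real n / (4 * t) / (4 * real n) = 3 / (16 * t)" using assms t0 by (simp add: field_simps)
  ultimately show ?thesis by (simp add: t_def)
qed

theorem theorem8p1: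
  "\<exists>c>0. \<forall>(CAL :: nat \<Rightarrow> (real \<times> bool) pmf \<Rightarrow> real) (\<epsilon> :: nat \<Rightarrow> real).
     ((\<forall>T\<ge>1. \<forall>D. valid_dist D \<longrightarrow> CAL T D \<ge> 0)
      \<and> (\<forall>T\<ge>1. \<epsilon> T \<ge> 0)
      \<and> (\<forall>T\<ge>1. \<forall>A U \<alpha>. decision_task A U \<and> \<alpha> \<ge> 0 \<longrightarrow>
            (\<exists>r. response_fun A r \<and>
                 (\<forall>D. valid_dist D \<and> CAL T D \<le> \<alpha> \<longrightarrow> swap_regret A U r D \<le> \<alpha>)))
      \<and> (\<forall>T\<ge>1. \<forall>D. valid_dist D \<and> calibrated D \<longrightarrow>
            (\<integral>\<^sup>+ xs. ennreal (CAL T (empirical xs)) \<partial>measure_pmf (replicate_pmf T D))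
              \<le> ennreal (\<epsilon> T)))
     \<longrightarrow> (\<forall>T::nat. T \<ge> 1 \<longrightarrow> \<epsilon> T \<ge> c / sqrt (real T))"
proof (rule exI[of _ "3 / (16 * sqrt 2)"], intro conjI allI impI)
  show "0 < 3 / (16 * sqrt 2)" by simp
  fix CAL :: "nat \<Rightarrow> (real \<times> bool) pmf \<Rightarrow> real" and \<epsilon> :: "nat \<Rightarrow> real" and T :: nat
  assume H: "(\<forall>T\<ge>1. \<forall>D. valid_dist D \<longrightarrow> CAL T D \<ge> 0)
      \<and> (\<forall>T\<ge>1. \<epsilon> T \<ge> 0)
      \<and> (\<forall>T\<ge>1. \<forall>A U \<alpha>. decision_task A U \<and> \<alpha> \<ge> 0 \<longrightarrow>
            (\<exists>r. response_fun A r \<and>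
                 (\<forall>D. valid_dist D \<and> CAL T D \<le> \<alpha> \<longrightarrow> swap_regret A U r D \<le> \<alpha>)))
      \<and> (\<forall>T\<ge>1. \<forall>D. valid_dist D \<and> calibrated D \<longrightarrow>
            (\<integral>\<^sup>+ xs. ennreal (CAL T (empirical xs)) \<partial>measure_pmf (replicate_pmf T D))
              \<le> ennreal (\<epsilon> T))"
    and T: "1 \<le> T"
  have h1: "\<And>D. valid_dist D \<Longrightarrow> CAL T D \<ge> 0" using H T by blast
  have h2: "\<epsilon> T \<ge> 0" using H T by blast
  have h3: "\<And>\<alpha>. \<alpha> \<ge> 0 \<Longrightarrow> \<exists>r. response_fun {0,1} r \<and>
                 (\<forall>D. valid_dist D \<and> CAL T D \<le> \<alpha> \<longrightarrow> swap_regret {0,1} UU r D \<le> \<alpha>)"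
    using H T task by blast
  have h4: "(\<integral>\<^sup>+ xs. ennreal (CAL T (empirical xs)) \<partial>measure_pmf (replicate_pmf T D0)) \<le> ennreal (\<epsilon> T)"
    using H T valid_D0 calib_D0 by blast
  define F where "F xs = CAL T (empirical xs)" for xs
  define R where "R = replicate_pmf T D0"
  have Fnn: "0 \<le> F xs" if "xs \<in> set_pmf R" for xs
  proof -
    from supp_rep[OF that[unfolded R_def]] have "length xs = T" "\<forall>x\<in>set xs. fst x = 1/2" by auto
    then have "valid_dist (empirical xs)" using T by (intro valid_emp) auto
    then show ?thesis unfolding F_def by (rule h1)
  qed
  have mir: "map flip xs \<in> set_pmf R" if "xs \<in> set_pmf R" for xs
  proof -
    have "map flip xs \<in> set_pmf (map_pmf (map flip) R)" using that by simp
    then show ?thesis unfolding R_def rep_flip .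
  qed
  have pair: "\<bar>ssum xs\<bar> / (2 * real T) \<le> F xs + F (map flip xs)" if xs: "xs \<in> set_pmf R" for xs
  proof -
    define \<alpha> where "\<alpha> = max (F xs) (F (map flip xs))"
    have a0: "\<alpha> \<ge> 0" using Fnn[OF xs] by (simp add: \<alpha>_def)
    obtain r where r: "\<forall>D. valid_dist D \<and> CAL T D \<le> \<alpha> \<longrightarrow> swap_regret {0,1} UU r D \<le> \<alpha>"
      using h3[OF a0] by blast
    from supp_rep[OF xs[unfolded R_def]] have L: "length xs = T" and P: "\<forall>x\<in>set xs. fst x = 1/2" by auto
    have ne: "xs \<noteq> []" using L T by auto
    have P': "\<forall>x\<in>set (map flip xs). fst x = 1/2" using P by (auto simp: flip_def)
    have ne': "map flip xs \<noteq> []" using ne by simp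
    have s1: "swap_regret {0,1} UU r (empirical xs) \<le> \<alpha>"
      using r valid_emp[OF ne P] by (auto simp: \<alpha>_def F_def)
    have s2: "swap_regret {0,1} UU r (empirical (map flip xs)) \<le> \<alpha>"
      using r valid_emp[OF ne' P'] by (auto simp: \<alpha>_def F_def)
    define w where "w = measure_pmf.expectation (r (1/2)) (\<lambda>a. UU a True)"
    define q where "q = ssum xs / real T"
    have u1: "UU (Suc 0) True = 1" and u0: "UU 0 True = 0" by (simp_all add: UU_def)
    have i1: "(1 - w) * q \<le> \<alpha>" using sr_ge[OF s1 ne P, of 1] L by (simp add: u1 w_def q_def)
    have i2: "(0 - w) * q \<le> \<alpha>" using sr_ge[OF s1 ne P, of 0] L by (simp add: u0 w_def q_def)
    have i3: "(1 - w) * (- q) \<le> \<alpha>" using sr_ge[OF s2 ne' P', of 1] L by (simp add: u1 w_def q_def ssum_flip)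
    have i4: "(0 - w) * (- q) \<le> \<alpha>" using sr_ge[OF s2 ne' P', of 0] L by (simp add: u0 w_def q_def ssum_flip)
    have "\<bar>q\<bar> \<le> 2 * \<alpha>"
    proof (cases "q \<ge> 0")
      case True
      have "q = (1 - w) * q + (0 - w) * (- q)" by (simp add: algebra_simps)
      then show ?thesis using i1 i4 True by linarith
    next
      case False
      have "- q = (1 - w) * (- q) + (0 - w) * q" by (simp add: algebra_simps)
      then show ?thesis using i3 i2 False by linarith
    qed
    moreover have "\<alpha> \<le> F xs + F (map flip xs)"
      using Fnn[OF xs] Fnn[OF mir[OF xs]] by (simp add: \<alpha>_def)
    moreover have "\<bar>ssum xs\<bar> / (2 * real T) = \<bar>q\<bar> / 2" using T by (simp add: q_def)
    ultimately show ?thesis by linarith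
  qed
  let ?E = "measure_pmf.expectation R"
  have EF: "?E F \<le> \<epsilon> T"
  proof -
    have "(\<integral>\<^sup>+ xs. ennreal (F xs) \<partial>measure_pmf R) = ennreal (?E F)"
      by (rule nn_integral_eq_integral) (auto simp: R_def AE_measure_pmf_iff intro: Fnn[unfolded R_def])
    with h4 have "ennreal (?E F) \<le> ennreal (\<epsilon> T)" by (simp add: F_def R_def)
    then show ?thesis using h2 by (simp add: ennreal_le_iff)
  qed
  have Eflip: "?E (\<lambda>xs. F (map flip xs)) = ?E F"
  proof -
    have "?E (\<lambda>xs. F (map flip xs)) = measure_pmf.expectation (map_pmf (map flip) R) F"
      by simp
    then show ?thesis unfolding R_def rep_flip .
  qed
  have "?E (\<lambda>xs. \<bar>ssum xs\<bar> / (2 * real T)) \<le> ?E (\<lambda>xs. F xs + F (map flip xs))"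
    by (rule integral_mono_AE) (auto simp: R_def AE_measure_pmf_iff intro: pair[unfolded R_def])
  then have "?E (\<lambda>xs. \<bar>ssum xs\<bar>) / (2 * real T) \<le> 2 * ?E F"
    using Eflip by (simp add: R_def Bochner_Integration.integral_add[OF intg intg])
  then have "?E (\<lambda>xs. \<bar>ssum xs\<bar>) / (4 * real T) \<le> ?E F" using T by (simp add: field_simps)
  then have "3 / (16 * sqrt (2 * real T)) \<le> \<epsilon> T" using abs_moment[OF T] EF unfolding R_def by linarith
  moreover have "3 / (16 * sqrt 2) / sqrt (real T) = 3 / (16 * sqrt (2 * real T))"
    by (simp add: real_sqrt_mult)
  ultimately show "3 / (16 * sqrt 2) / sqrt (real T) \<le> \<epsilon> T" by metis
qed

end
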